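(* Let $\langle A;\cdot\rangle$ be a semigroup satisfying condition $( * )$. Then $\langle A;\cdot\rangle$ is an Abelian algebra if and only if $\langle A;\cdot\rangle$ is an inflation of a subsemigroup which is semisimple and is an Abelian algebra.
   Context: $A\cdot A=\{xy\mid x,y\in A\}$. Condition $( * )$: either ($bcA=bA$ and $Abc=Ac$ for all $b,c\in A$), or the set $A\cdot A$ is finite. A semigroup is semisimple if each of its principal factors is simple or $0$-simple. A semigroup $\langle A;\cdot\rangle$ is an inflation of a subsemigroup $\langle B;\cdot\rangle$ if there is a partition $\{X_b\mid b\in B\}$ of $A$ with $b\in X_b$ and $x\cdot y=a\cdot b$ for all $a,b\in B$, $x\in X_a$, $y\in X_b$. A polynomial operation of an algebra is an operation obtained from a term by substituting elements of the algebra for some of its variables. An algebra is called Abelian if for every polynomial operation $t(x,y_1,\ldots,y_n)$ and all elements $u,v,c_1,\ldots,c_n,d_1,\ldots,d_n$ of the algebra, $t(u,c_1,\ldots,c_n)=t(u,d_1,\ldots,d_n)$ implies $t(v,c_1,\ldots,c_n)=t(v,d_1,\ldots,d_n)$. *)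

theory Defs
  imports Main
begin

definition semigroup_on :: "'a set \<Rightarrow> ('a \<Rightarrow> 'a \<Rightarrow> 'a) \<Rightarrow> bool" where
  "semigroup_on A f \<longleftrightarrow> (\<forall>x\<in>A. \<forall>y\<in>A. f x y \<in> A) \<and>
     (\<forall>x\<in>A. \<forall>y\<in>A. \<forall>z\<in>A. f (f x y) z = f x (f y z))"

definition prod_set :: "'a set \<Rightarrow> ('a \<Rightarrow> 'a \<Rightarrow> 'a) \<Rightarrow> 'a set" where
  "prod_set A f = {f x y | x y. x \<in> A \<and> y \<in> A}"

definition cond_star :: "'a set \<Rightarrow> ('a \<Rightarrow> 'a \<Rightarrow> 'a) \<Rightarrow> bool" where
  "cond_star A f \<longleftrightarrow>
     (\<forall>b\<in>A. \<forall>c\<in>A. {f (f b c) x | x. x \<in> A} = {f b x | x. x \<in> A} \<and>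
                    {f x (f b c) | x. x \<in> A} = {f x c | x. x \<in> A})
     \<or> finite (prod_set A f)"

definition ideal_on :: "'a set \<Rightarrow> ('a \<Rightarrow> 'a \<Rightarrow> 'a) \<Rightarrow> 'a set \<Rightarrow> bool" where
  "ideal_on A f I \<longleftrightarrow> I \<noteq> {} \<and> I \<subseteq> A \<and> (\<forall>x\<in>I. \<forall>y\<in>A. f x y \<in> I \<and> f y x \<in> I)"

definition simple_sg :: "'a set \<Rightarrow> ('a \<Rightarrow> 'a \<Rightarrow> 'a) \<Rightarrow> bool" where
  "simple_sg A f \<longleftrightarrow> semigroup_on A f \<and> A \<noteq> {} \<and> (\<forall>I. ideal_on A f I \<longrightarrow> I = A)"

definition zero_simple_sg :: "'a set \<Rightarrow> ('a \<Rightarrow> 'a \<Rightarrow> 'a) \<Rightarrow> bool" where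
  "zero_simple_sg A f \<longleftrightarrow> semigroup_on A f \<and>
     (\<exists>z\<in>A. (\<forall>x\<in>A. f z x = z \<and> f x z = z) \<and> prod_set A f \<noteq> {z} \<and>
        (\<forall>I. ideal_on A f I \<longrightarrow> I = {z} \<or> I = A))"

text \<open>Principal ideal J(a) = A^1 a A^1 and I(a) = {b in J(a). J(b) properly contained in J(a)}.\<close>
definition pideal :: "'a set \<Rightarrow> ('a \<Rightarrow> 'a \<Rightarrow> 'a) \<Rightarrow> 'a \<Rightarrow> 'a set" where
  "pideal A f a = {a} \<union> {f a x | x. x \<in> A} \<union> {f x a | x. x \<in> A}
                  \<union> {f (f x a) y | x y. x \<in> A \<and> y \<in> A}"

definition pideal_below :: "'a set \<Rightarrow> ('a \<Rightarrow> 'a \<Rightarrow> 'a) \<Rightarrow> 'a \<Rightarrow> 'a set" where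
  "pideal_below A f a = {b \<in> pideal A f a. pideal A f b \<subset> pideal A f a}"

text \<open>The principal factor J(a)/I(a) (Rees quotient), realised on 'a option with None as the
  zero; if I(a) is empty the principal factor is J(a) itself.\<close>
definition pfactor_carrier :: "'a set \<Rightarrow> ('a \<Rightarrow> 'a \<Rightarrow> 'a) \<Rightarrow> 'a \<Rightarrow> 'a option set" where
  "pfactor_carrier A f a =
     (if pideal_below A f a = {} then Some ` pideal A f a
      else insert None (Some ` (pideal A f a - pideal_below A f a)))"

fun pfactor_op :: "'a set \<Rightarrow> ('a \<Rightarrow> 'a \<Rightarrow> 'a) \<Rightarrow> 'a \<Rightarrow> 'a option \<Rightarrow> 'a option \<Rightarrow> 'a option" where
  "pfactor_op A f a (Some x) (Some y) =
     (if f x y \<in> pideal A f a - pideal_below A f a then Some (f x y) else None)"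
| "pfactor_op A f a _ _ = None"

definition semisimple :: "'a set \<Rightarrow> ('a \<Rightarrow> 'a \<Rightarrow> 'a) \<Rightarrow> bool" where
  "semisimple A f \<longleftrightarrow> (\<forall>a\<in>A. simple_sg (pfactor_carrier A f a) (pfactor_op A f a) \<or>
                                zero_simple_sg (pfactor_carrier A f a) (pfactor_op A f a))"

definition inflation_of :: "'a set \<Rightarrow> ('a \<Rightarrow> 'a \<Rightarrow> 'a) \<Rightarrow> 'a set \<Rightarrow> bool" where
  "inflation_of A f B \<longleftrightarrow> B \<subseteq> A \<and> semigroup_on B f \<and>
     (\<exists>X :: 'a \<Rightarrow> 'a set.
        (\<forall>b\<in>B. b \<in> X b \<and> X b \<subseteq> A) \<and>
        (\<forall>x\<in>A. \<exists>!b. b \<in> B \<and> x \<in> X b) \<and>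
        (\<forall>a\<in>B. \<forall>b\<in>B. \<forall>x\<in>X a. \<forall>y\<in>X b. f x y = f a b))"

text \<open>Terms of the semigroup language with constants (polynomials).\<close>
datatype 'a pterm = PVar nat | PConst 'a | PMul "'a pterm" "'a pterm"

fun pconsts :: "'a pterm \<Rightarrow> 'a set" where
  "pconsts (PVar i) = {}"
| "pconsts (PConst c) = {c}"
| "pconsts (PMul s t) = pconsts s \<union> pconsts t"

fun peval :: "('a \<Rightarrow> 'a \<Rightarrow> 'a) \<Rightarrow> (nat \<Rightarrow> 'a) \<Rightarrow> 'a pterm \<Rightarrow> 'a" where
  "peval f env (PVar i) = env i"
| "peval f env (PConst c) = c"
| "peval f env (PMul s t) = f (peval f env s) (peval f env t)"

text \<open>Abelian algebra: variable 0 plays the role of x, variables 1,2,... the y_i.\<close>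
definition abelian_alg :: "'a set \<Rightarrow> ('a \<Rightarrow> 'a \<Rightarrow> 'a) \<Rightarrow> bool" where
  "abelian_alg A f \<longleftrightarrow>
     (\<forall>t u v c d. pconsts t \<subseteq> A \<longrightarrow> u \<in> A \<longrightarrow> v \<in> A \<longrightarrow> range c \<subseteq> A \<longrightarrow> range d \<subseteq> A \<longrightarrow>
        peval f (c(0 := u)) t = peval f (d(0 := u)) t \<longrightarrow>
        peval f (c(0 := v)) t = peval f (d(0 := v)) t)"

end

theory Submission
  imports Defs
begin

lemma sg_cl: "semigroup_on A f \<Longrightarrow> x \<in> A \<Longrightarrow> y \<in> A \<Longrightarrow> f x y \<in> A"
  unfolding semigroup_on_def by blast

lemma sg_assoc: "semigroup_on A f \<Longrightarrow> x \<in> A \<Longrightarrow> y \<in> A \<Longrightarrow> z \<in> A \<Longrightarrow> f (f x y) z = f x (f y z)"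
  unfolding semigroup_on_def by blast

lemma abel_T1:
  assumes "abelian_alg A f" "c\<in>A" "d\<in>A" "u\<in>A" "v\<in>A" "f c u = f d u"
  shows "f c v = f d v"
proof -
  have "\<forall>t u v c d. pconsts t \<subseteq> A \<longrightarrow> u \<in> A \<longrightarrow> v \<in> A \<longrightarrow> range c \<subseteq> A \<longrightarrow> range d \<subseteq> A \<longrightarrow>
        peval f (c(0 := u)) t = peval f (d(0 := u)) t \<longrightarrow>
        peval f (c(0 := v)) t = peval f (d(0 := v)) t" using assms(1) unfolding abelian_alg_def by blast
  note H = this[rule_format, of "PMul (PVar 1) (PVar 0)" u v "\<lambda>_. c" "\<lambda>_. d"]
  show ?thesis using H assms(2-6) by auto
qed

lemma abel_T2:
  assumes "abelian_alg A f" "c\<in>A" "d\<in>A" "u\<in>A" "v\<in>A" "f u c = f u d"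
  shows "f v c = f v d"
proof -
  have "\<forall>t u v c d. pconsts t \<subseteq> A \<longrightarrow> u \<in> A \<longrightarrow> v \<in> A \<longrightarrow> range c \<subseteq> A \<longrightarrow> range d \<subseteq> A \<longrightarrow>
        peval f (c(0 := u)) t = peval f (d(0 := u)) t \<longrightarrow>
        peval f (c(0 := v)) t = peval f (d(0 := v)) t" using assms(1) unfolding abelian_alg_def by blast
  note H = this[rule_format, of "PMul (PVar 0) (PVar 1)" u v "\<lambda>_. c" "\<lambda>_. d"]
  show ?thesis using H assms(2-6) by auto
qed

fun pw :: "('a \<Rightarrow> 'a \<Rightarrow> 'a) \<Rightarrow> 'a \<Rightarrow> nat \<Rightarrow> 'a" where
  "pw f x 0 = x"
| "pw f x (Suc n) = f (pw f x n) x"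

lemma pw_in: "semigroup_on A f \<Longrightarrow> x \<in> A \<Longrightarrow> pw f x n \<in> A"
  by (induction n) (auto intro: sg_cl)

lemma pw_add: "semigroup_on A f \<Longrightarrow> x \<in> A \<Longrightarrow> f (pw f x a) (pw f x b) = pw f x (a + b + 1)"
proof (induction b)
  case 0 then show ?case by simp
next
  case (Suc b)
  have "f (pw f x a) (pw f x (Suc b)) = f (f (pw f x a) (pw f x b)) x"
    using Suc.prems by (simp add: sg_assoc pw_in)
  also have "\<dots> = pw f x (a + Suc b + 1)" using Suc by simp
  finally show ?case .
qed

lemma pw_prod: "semigroup_on A f \<Longrightarrow> x \<in> A \<Longrightarrow> pw f x (Suc n) \<in> prod_set A f"
  unfolding prod_set_def using pw_in by fastforce

lemma idem_pow:
  assumes sg: "semigroup_on A f" and fin: "finite (prod_set A f)" and x: "x \<in> A"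
  shows "\<exists>n. f (pw f x n) (pw f x n) = pw f x n"
proof -
  define g where "g n = pw f x (Suc n)" for n
  have "range g \<subseteq> prod_set A f" using pw_prod[OF sg x] unfolding g_def by auto
  then have "finite (range g)" using fin finite_subset by blast
  then have "\<not> inj g" using finite_imageD by (metis infinite_UNIV_nat)
  then obtain i j where ij: "i \<noteq> j" "g i = g j" unfolding inj_def by blast
  then obtain i j where ij: "i < j" "g i = g j" by (metis linorder_neq_iff)
  define a where "a = Suc i"
  define p where "p = j - i"
  have p0: "p > 0" using ij p_def by simp
  have eq: "pw f x a = pw f x (a + p)" using ij unfolding g_def a_def p_def by simp
  have per: "pw f x (a + t) = pw f x (a + t + p)" for t
  proof (cases t)
    case 0 then show ?thesis using eq by simp
  next
    case (Suc t')
    have "pw f x (a + t) = f (pw f x a) (pw f x t')" using pw_add[OF sg x, of a t'] Suc by simp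
    also have "\<dots> = f (pw f x (a+p)) (pw f x t')" using eq by simp
    also have "\<dots> = pw f x (a + t + p)" using pw_add[OF sg x, of "a+p" t'] Suc by (simp add: ac_simps)
    finally show ?thesis .
  qed
  have perq: "pw f x (a + t) = pw f x (a + t + q * p)" for q t
  proof (induction q)
    case 0 then show ?case by simp
  next
    case (Suc q)
    have "pw f x (a + t + Suc q * p) = pw f x (a + (t + q * p) + p)" by (simp add: algebra_simps)
    also have "\<dots> = pw f x (a + (t + q*p))" using per by metis
    also have "\<dots> = pw f x (a + t)" using Suc by (simp add: add.assoc)
    finally show ?case by simp
  qed
  define n where "n = (a + 1) * p - 1"
  have m: "a + 1 \<le> (a+1)*p" using mult_le_mono2[of 1 p "a+1"] p0 by simp
  have n1: "n + 1 = (a + 1) * p" using m unfolding n_def by simp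
  have na: "n \<ge> a" using m n1 by linarith
  have e: "n + n + 1 = a + (n - a) + (a+1) * p" using na n1 by linarith
  have "f (pw f x n) (pw f x n) = pw f x (n + n + 1)" using pw_add[OF sg x] by simp
  also have "\<dots> = pw f x (a + (n - a) + (a+1) * p)" by (simp only: e)
  also have "\<dots> = pw f x (a + (n - a))" using perq by metis
  also have "\<dots> = pw f x n" using na by simp
  finally show ?thesis by blast
qed


fun pmap :: "('a \<Rightarrow> 'a) \<Rightarrow> 'a pterm \<Rightarrow> 'a pterm" where
  "pmap g (PVar i) = PVar i"
| "pmap g (PConst c) = PConst (g c)"
| "pmap g (PMul s t) = PMul (pmap g s) (pmap g t)"

lemma pconsts_pmap: "pconsts (pmap g t) = g ` pconsts t"
  by (induction t) auto

lemma peval_in: "semigroup_on A f \<Longrightarrow> pconsts t \<subseteq> A \<Longrightarrow> range env \<subseteq> A \<Longrightarrow> peval f env t \<in> A"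
  by (induction t) (auto intro: sg_cl)

locale retr =
  fixes A B :: "'a set" and f :: "'a \<Rightarrow> 'a \<Rightarrow> 'a" and g :: "'a \<Rightarrow> 'a"
  assumes sg: "semigroup_on A f" and BA: "B \<subseteq> A"
    and gB: "\<And>x. x \<in> A \<Longrightarrow> g x \<in> B" and gid: "\<And>b. b \<in> B \<Longrightarrow> g b = b"
    and gmul: "\<And>x y. x \<in> A \<Longrightarrow> y \<in> A \<Longrightarrow> f x y = f (g x) (g y)"
    and Bcl: "\<And>x y. x \<in> B \<Longrightarrow> y \<in> B \<Longrightarrow> f x y \<in> B"
begin

lemma peval_g: "pconsts t \<subseteq> A \<Longrightarrow> range env \<subseteq> A \<Longrightarrow>
   peval f (g \<circ> env) (pmap g t) = g (peval f env t)"
proof (induction t)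
  case (PVar i) then show ?case by simp
next
  case (PConst c) then show ?case by simp
next
  case (PMul s r)
  have ps: "peval f env s \<in> A" and pr: "peval f env r \<in> A"
    using PMul.prems peval_in[OF sg] by auto
  have "peval f (g \<circ> env) (pmap g (PMul s r)) = f (g (peval f env s)) (g (peval f env r))"
    using PMul by (simp add: comp_def)
  also have "\<dots> = f (peval f env s) (peval f env r)" using gmul ps pr by simp
  also have "\<dots> = g (f (peval f env s) (peval f env r))"
  proof -
    have "f (peval f env s) (peval f env r) \<in> B" using gmul[OF ps pr] gB[OF ps] gB[OF pr] Bcl by simp
    then show ?thesis using gid by simp
  qed
  finally show ?case by (simp add: comp_def)
qed

lemma abel: assumes ab: "abelian_alg B f" shows "abelian_alg A f"
  unfolding abelian_alg_def
proof (intro allI impI)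
  fix t u v and c d :: "nat \<Rightarrow> 'a"
  assume t: "pconsts t \<subseteq> A" and u: "u \<in> A" and v: "v \<in> A" and c: "range c \<subseteq> A"
    and d: "range d \<subseteq> A" and eq: "peval f (c(0 := u)) t = peval f (d(0 := u)) t"
  show "peval f (c(0 := v)) t = peval f (d(0 := v)) t"
  proof (cases t)
    case (PVar i) then show ?thesis using eq by (cases "i = 0") auto
  next
    case (PConst x) then show ?thesis by simp
  next
    case (PMul s r)
    have rng: "range (e(0 := w)) \<subseteq> A" if "range e \<subseteq> A" "w \<in> A" for e w
      using that by auto
    have comp: "g \<circ> (e(0 := w)) = (g \<circ> e)(0 := g w)" for e w by auto
    have inB: "peval f env t \<in> B" if "range env \<subseteq> A" for env
    proof -
      have ps: "peval f env s \<in> A" and pr: "peval f env r \<in> A"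
        using t that peval_in[OF sg] PMul by auto
      then show ?thesis using PMul gmul gB Bcl by simp
    qed
    have conv: "peval f (e(0 := w)) t = peval f ((g \<circ> e)(0 := g w)) (pmap g t)"
      if "range e \<subseteq> A" "w \<in> A" for e w
    proof -
      have "peval f (e(0 := w)) t = g (peval f (e(0 := w)) t)"
        using inB[OF rng[OF that]] gid by simp
      also have "\<dots> = peval f (g \<circ> (e(0 := w))) (pmap g t)"
        using peval_g[OF t rng[OF that]] by simp
      finally show ?thesis by (simp add: comp)
    qed
    have gc: "range (g \<circ> e) \<subseteq> B" if "range e \<subseteq> A" for e using that gB by auto
    have tc: "pconsts (pmap g t) \<subseteq> B" using t gB by (auto simp: pconsts_pmap)
    have "peval f ((g \<circ> c)(0 := g u)) (pmap g t) = peval f ((g \<circ> d)(0 := g u)) (pmap g t)"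
      using eq conv[OF c u] conv[OF d u] by simp
    then have "peval f ((g \<circ> c)(0 := g v)) (pmap g t) = peval f ((g \<circ> d)(0 := g v)) (pmap g t)"
      using ab[unfolded abelian_alg_def, rule_format, OF tc gB[OF u] gB[OF v] gc[OF c] gc[OF d]] by blast
    then show ?thesis using conv[OF c v] conv[OF d v] by simp
  qed
qed

end

lemma infl_abel:
  assumes sg: "semigroup_on A f" and inf: "inflation_of A f B" and ab: "abelian_alg B f"
  shows "abelian_alg A f"
proof -
  obtain X where BA: "B \<subseteq> A" and sgB: "semigroup_on B f"
    and X1: "\<forall>b\<in>B. b \<in> X b \<and> X b \<subseteq> A"
    and X2: "\<forall>x\<in>A. \<exists>!b. b \<in> B \<and> x \<in> X b"
    and X3: "\<forall>a\<in>B. \<forall>b\<in>B. \<forall>x\<in>X a. \<forall>y\<in>X b. f x y = f a b"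
    using inf unfolding inflation_of_def by blast
  define g where "g x = (THE b. b \<in> B \<and> x \<in> X b)" for x
  have g1: "g x \<in> B \<and> x \<in> X (g x)" if "x \<in> A" for x
    using theI'[OF X2[rule_format, OF that]] unfolding g_def .
  have g2: "g b = b" if "b \<in> B" for b
  proof -
    have bA: "b \<in> A" using that BA by blast
    have "b \<in> B \<and> b \<in> X b" using X1 that by blast
    then show ?thesis unfolding g_def by (rule the1_equality[OF X2[rule_format, OF bA]])
  qed
  interpret retr A B f g
  proof
    show "semigroup_on A f" by fact
    show "B \<subseteq> A" by fact
    show "\<And>x. x \<in> A \<Longrightarrow> g x \<in> B" using g1 by simp
    show "\<And>b. b \<in> B \<Longrightarrow> g b = b" by (rule g2)
    show "f x y = f (g x) (g y)" if "x \<in> A" "y \<in> A" for x y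
      using X3[rule_format, of "g x" "g y" x y] g1[OF that(1)] g1[OF that(2)] by simp
    show "\<And>x y. x \<in> B \<Longrightarrow> y \<in> B \<Longrightarrow> f x y \<in> B" using sgB by (rule sg_cl)
  qed
  show ?thesis using abel[OF ab] .
qed


lemma idem_left:
  assumes ab: "abelian_alg A f" and sg: "semigroup_on A f" and x: "x \<in> A" and e: "e \<in> A"
    and ee: "f e e = e" and v: "v \<in> A"
  shows "f (f x e) v = f x v"
proof -
  have "f (f x e) e = f x e" using sg_assoc[OF sg x e e] ee by simp
  then show ?thesis using abel_T1[OF ab _ x e v] sg_cl[OF sg x e] by blast
qed

lemma exists_k:
  assumes ab: "abelian_alg A f" and sg: "semigroup_on A f" and cs: "cond_star A f" and x: "x \<in> A"
  shows "\<exists>k\<in>prod_set A f. \<forall>v\<in>A. f k v = f x v \<and> f v k = f v x"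
proof -
  have cl: "\<And>a b. a \<in> A \<Longrightarrow> b \<in> A \<Longrightarrow> f a b \<in> A" using sg_cl[OF sg] .
  have as: "\<And>a b c. a \<in> A \<Longrightarrow> b \<in> A \<Longrightarrow> c \<in> A \<Longrightarrow> f (f a b) c = f a (f b c)" using sg_assoc[OF sg] .
  obtain e where e: "e \<in> A" "f e e = e" and R: "\<forall>v\<in>A. f v (f x e) = f v x"
  proof (cases "finite (prod_set A f)")
    case True
    obtain n where n: "f (pw f x n) (pw f x n) = pw f x n" using idem_pow[OF sg True x] by blast
    define e where "e = pw f x n"
    have eA: "e \<in> A" unfolding e_def using pw_in[OF sg x] .
    have xe: "f x e = f e x" unfolding e_def using pw_add[OF sg x, of 0 n] by simp
    have "f e (f x e) = f e x" using xe as[OF eA eA x] n e_def by simp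
    then have "\<forall>v\<in>A. f v (f x e) = f v x" using abel_T2[OF ab cl[OF x eA] x eA] by blast
    then show ?thesis using that eA n e_def by blast
  next
    case False
    then have H0: "\<forall>b\<in>A. \<forall>c\<in>A. {f (f b c) y | y. y \<in> A} = {f b y | y. y \<in> A} \<and>
                    {f y (f b c) | y. y \<in> A} = {f y c | y. y \<in> A}"
      using cs unfolding cond_star_def by blast
    have H: "\<forall>b\<in>A. \<forall>c\<in>A. {f (f b c) y | y. y \<in> A} = {f b y | y. y \<in> A}"
      using H0 by simp
    have "f x x \<in> {f x y | y. y \<in> A}" using x by blast
    moreover have "{f (f x x) y | y. y \<in> A} = {f x y | y. y \<in> A}" using H[rule_format, OF x x] .
    ultimately have "f x x \<in> {f (f x x) y | y. y \<in> A}" by simp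
    then obtain w where w: "w \<in> A" "f x x = f (f x x) w" by blast
    have xx: "f x x \<in> A" using cl x by blast
    have "f x x = f x (f x w)" using w(2) as[OF x x w(1)] by (rule trans)
    then have R1: "\<forall>v\<in>A. f v x = f v (f x w)" using abel_T2[OF ab x cl[OF x w(1)] x] by blast
    have "f (f (f x x) w) w = f (f x x) w" using w(2)[symmetric] by simp
    then have "f (f x x) (f w w) = f (f x x) w" using as[OF xx w(1) w(1)] by simp
    then have R2: "\<forall>v\<in>A. f v (f w w) = f v w" using abel_T2[OF ab cl[OF w(1) w(1)] w(1) xx] by blast
    define e where "e = f w w"
    have eA: "e \<in> A" unfolding e_def using cl w by blast
    have ee: "f e e = e"
    proof -
      have "f e e = f e w" using R2 eA unfolding e_def by blast
      also have "\<dots> = f w (f w w)" unfolding e_def using as w by simp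
      also have "\<dots> = e" using R2 w unfolding e_def by blast
      finally show ?thesis .
    qed
    have "\<forall>v\<in>A. f v (f x e) = f v x"
    proof
      fix v assume v: "v \<in> A"
      have "f v (f x e) = f (f v x) e" using as v x eA by simp
      also have "\<dots> = f (f v x) w" using R2 cl[OF v x] unfolding e_def by blast
      also have "\<dots> = f v (f x w)" using as v x w by simp
      also have "\<dots> = f v x" using R1 v by simp
      finally show "f v (f x e) = f v x" .
    qed
    then show ?thesis using that eA ee by blast
  qed
  have "f x e \<in> prod_set A f" unfolding prod_set_def using x e by blast
  moreover have "\<forall>v\<in>A. f (f x e) v = f x v \<and> f v (f x e) = f v x"
    using idem_left[OF ab sg x e] R by blast
  ultimately show ?thesis by blast
qed

lemma simple_B:
  assumes ab: "abelian_alg A f" and sg: "semigroup_on A f" and cs: "cond_star A f"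
    and s: "s \<in> prod_set A f" and t: "t \<in> prod_set A f"
  shows "\<exists>b1\<in>prod_set A f. \<exists>b2\<in>prod_set A f. t = f (f b1 s) b2"
proof -
  have cl: "\<And>a b. a \<in> A \<Longrightarrow> b \<in> A \<Longrightarrow> f a b \<in> A" using sg_cl[OF sg] .
  have as: "\<And>a b c. a \<in> A \<Longrightarrow> b \<in> A \<Longrightarrow> c \<in> A \<Longrightarrow> f (f a b) c = f a (f b c)" using sg_assoc[OF sg] .
  have inB: "\<And>a b. a \<in> A \<Longrightarrow> b \<in> A \<Longrightarrow> f a b \<in> prod_set A f" unfolding prod_set_def by blast
  obtain b' c' where s': "b' \<in> A" "c' \<in> A" "s = f b' c'" using s unfolding prod_set_def by blast
  obtain b c where t': "b \<in> A" "c \<in> A" "t = f b c" using t unfolding prod_set_def by blast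
  have sA: "s \<in> A" using s' cl by blast
  show ?thesis
  proof (cases "finite (prod_set A f)")
    case True
    obtain n where n: "f (pw f s n) (pw f s n) = pw f s n" using idem_pow[OF sg True sA] by blast
    define e where "e = pw f s n"
    define p where "p = pw f s (n + n)"
    have eA: "e \<in> A" unfolding e_def using pw_in[OF sg sA] .
    have pA: "p \<in> A" unfolding p_def using pw_in[OF sg sA] .
    have ee: "f e e = e" using n unfolding e_def .
    have "f s p = pw f s (0 + (n + n) + 1)" unfolding p_def using pw_add[OF sg sA, of 0 "n+n"] by simp
    also have "\<dots> = pw f s (n + n + 1)" by simp
    also have "\<dots> = f (pw f s n) (pw f s n)" using pw_add[OF sg sA, of n n] by simp
    also have "\<dots> = e" using n unfolding e_def .
    finally have esp: "e = f s p" by simp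
    have beA: "f b e \<in> A" using cl t'(1) eA by blast
    have be: "f b e = f (f (f b e) s) p"
    proof -
      have "f b e = f b (f e e)" by (simp only: ee)
      also have "\<dots> = f (f b e) e" using as[OF t'(1) eA eA] by simp
      also have "\<dots> = f (f b e) (f s p)" using esp by (rule arg_cong)
      also have "\<dots> = f (f (f b e) s) p" using as[OF beA sA pA] by simp
      finally show ?thesis .
    qed
    have bes: "f (f b e) s \<in> A" using cl beA sA by blast
    have "t = f (f b e) c" using idem_left[OF ab sg t'(1) eA ee t'(2)] t'(3) by simp
    also have "\<dots> = f (f (f (f b e) s) p) c" using be by (rule arg_cong)
    also have "\<dots> = f (f (f b e) s) (f p c)" using as[OF bes pA t'(2)] .
    finally have "t = f (f (f b e) s) (f p c)" .
    then show ?thesis using inB[OF t'(1) eA] inB[OF pA t'(2)] by blast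
  next
    case False
    then have H: "\<forall>b\<in>A. \<forall>c\<in>A. {f (f b c) y | y. y \<in> A} = {f b y | y. y \<in> A} \<and>
                    {f y (f b c) | y. y \<in> A} = {f y c | y. y \<in> A}"
      using cs unfolding cond_star_def by blast
    have m1: "f b' c' \<in> {f b' y | y. y \<in> A}" using s' by blast
    have e1: "{f (f b' c') y | y. y \<in> A} = {f b' y | y. y \<in> A}" using H[rule_format, OF s'(1) s'(2)] by (rule conjunct1)
    have "f b' c' \<in> {f (f b' c') y | y. y \<in> A}" unfolding e1 by (rule m1)
    then obtain w1 where w1: "w1 \<in> A" "f b' c' = f (f b' c') w1" by blast
    then have w1: "w1 \<in> A" "s = f s w1" using s'(3) by simp_all
    have m2: "f b' c' \<in> {f y c' | y. y \<in> A}" using s' by blast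
    have e2: "{f y (f b' c') | y. y \<in> A} = {f y c' | y. y \<in> A}" using H[rule_format, OF s'(1) s'(2)] by (rule conjunct2)
    have "f b' c' \<in> {f y (f b' c') | y. y \<in> A}" unfolding e2 by (rule m2)
    then obtain w2 where w2: "w2 \<in> A" "f b' c' = f w2 (f b' c')" by blast
    then have w2: "w2 \<in> A" "s = f w2 s" using s'(3) by simp_all
    have m3: "f b c \<in> {f b y | y. y \<in> A}" using t' by blast
    have e3: "{f (f b s) y | y. y \<in> A} = {f b y | y. y \<in> A}" using H[rule_format, OF t'(1) sA] by (rule conjunct1)
    have "f b c \<in> {f (f b s) y | y. y \<in> A}" unfolding e3 by (rule m3)
    then obtain w where w: "w \<in> A" "f b c = f (f b s) w" by blast
    then have w: "w \<in> A" "t = f (f b s) w" using t'(3) by simp_all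
    have bs: "f b s = f (f b w2) s"
    proof -
      have "f b s = f b (f w2 s)" using w2(2) by (rule arg_cong)
      also have "\<dots> = f (f b w2) s" using as[OF t'(1) w2(1) sA] by simp
      finally show ?thesis .
    qed
    have sw: "f s w = f s (f w1 w)"
    proof -
      have "f s w = f (f s w1) w" using w1(2) by (rule arg_cong)
      also have "\<dots> = f s (f w1 w)" using as[OF sA w1(1) w(1)] by simp
      finally show ?thesis .
    qed
    have bw2: "f b w2 \<in> A" using cl t'(1) w2(1) by blast
    have "t = f (f b s) w" using w(2) .
    also have "\<dots> = f (f (f b w2) s) w" by (simp only: bs)
    also have "\<dots> = f (f b w2) (f s w)" using as[OF bw2 sA w(1)] .
    also have "\<dots> = f (f b w2) (f s (f w1 w))" by (simp only: sw)
    also have "\<dots> = f (f (f b w2) s) (f w1 w)" using as[OF bw2 sA cl[OF w1(1) w(1)]] by simp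
    finally have T: "t = f (f (f b w2) s) (f w1 w)" .
    show ?thesis using T inB[OF t'(1) w2(1)] inB[OF w1(1) w(1)] by blast
  qed
qed


theorem mainTheorem17:
  fixes A :: "'a set" and f :: "'a \<Rightarrow> 'a \<Rightarrow> 'a"
  assumes "semigroup_on A f" and "cond_star A f"
  shows "abelian_alg A f \<longleftrightarrow>
         (\<exists>B. inflation_of A f B \<and> semisimple B f \<and> abelian_alg B f)"
proof
  assume ab: "abelian_alg A f"
  note sg = assms(1) and cs = assms(2)
  define B where "B = prod_set A f"
  have BA: "B \<subseteq> A" unfolding B_def prod_set_def using sg_cl[OF sg] by blast
  have Bcl: "f x y \<in> B" if "x \<in> B" "y \<in> B" for x y
    unfolding B_def prod_set_def using that BA by blast
  have sgB: "semigroup_on B f" unfolding semigroup_on_def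
    using Bcl sg_assoc[OF sg] BA by (meson subsetD)
  have abB: "abelian_alg B f"
    unfolding abelian_alg_def
  proof (intro allI impI)
    fix t u v and c d :: "nat \<Rightarrow> 'a"
    assume h: "pconsts t \<subseteq> B" "u \<in> B" "v \<in> B" "range c \<subseteq> B" "range d \<subseteq> B"
      "peval f (c(0 := u)) t = peval f (d(0 := u)) t"
    have "pconsts t \<subseteq> A" "u \<in> A" "v \<in> A" "range c \<subseteq> A" "range d \<subseteq> A"
      using h(1-5) BA by auto
    then show "peval f (c(0 := v)) t = peval f (d(0 := v)) t"
      using ab[unfolded abelian_alg_def, rule_format] h(6) by blast
  qed
  have semi: "semisimple B f"
    unfolding semisimple_def
  proof (intro ballI disjI1)
    fix a assume aB: "a \<in> B"
    have PI: "pideal B f b = B" if bB: "b \<in> B" for b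
    proof
      show "pideal B f b \<subseteq> B" unfolding pideal_def using bB Bcl by auto
      show "B \<subseteq> pideal B f b"
      proof
        fix t assume tB: "t \<in> B"
        obtain b1 b2 where "b1 \<in> B" "b2 \<in> B" "t = f (f b1 b) b2"
          using simple_B[OF ab sg cs, of b t] bB tB unfolding B_def by blast
        then show "t \<in> pideal B f b" unfolding pideal_def by blast
      qed
    qed
    have PB: "pideal_below B f a = {}"
      unfolding pideal_below_def using PI aB by auto
    have car: "pfactor_carrier B f a = Some ` B"
      unfolding pfactor_carrier_def using PB PI aB by simp
    have opS: "pfactor_op B f a (Some x) (Some y) = Some (f x y)" if "x \<in> B" "y \<in> B" for x y
      using PB PI[OF aB] Bcl[OF that] by simp
    show "simple_sg (pfactor_carrier B f a) (pfactor_op B f a)"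
      unfolding simple_sg_def car
    proof (intro conjI allI impI)
      show "semigroup_on (Some ` B) (pfactor_op B f a)"
        unfolding semigroup_on_def
      proof (intro conjI ballI)
        fix x y assume "x \<in> Some ` B" "y \<in> Some ` B"
        then obtain x' y' where "x' \<in> B" "y' \<in> B" "x = Some x'" "y = Some y'" by blast
        then show "pfactor_op B f a x y \<in> Some ` B" using opS Bcl by simp
      next
        fix x y z assume "x \<in> Some ` B" "y \<in> Some ` B" "z \<in> Some ` B"
        then obtain x' y' z' where "x' \<in> B" "y' \<in> B" "z' \<in> B" "x = Some x'" "y = Some y'" "z = Some z'" by blast
        then show "pfactor_op B f a (pfactor_op B f a x y) z = pfactor_op B f a x (pfactor_op B f a y z)"
          using opS Bcl sg_assoc[OF sgB, unfolded] by (simp del: pfactor_op.simps add: sg_assoc[OF sgB])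
      qed
      show "Some ` B \<noteq> {}" using aB by blast
      fix I assume I: "ideal_on (Some ` B) (pfactor_op B f a) I"
      show "I = Some ` B"
      proof
        show "I \<subseteq> Some ` B" using I unfolding ideal_on_def by blast
        obtain i where iI: "i \<in> I" using I unfolding ideal_on_def by blast
        then obtain i' where i': "i' \<in> B" "i = Some i'" using I unfolding ideal_on_def by blast
        have Icl: "pfactor_op B f a x y \<in> I \<and> pfactor_op B f a y x \<in> I" if "x \<in> I" "y \<in> Some ` B" for x y
          using I that unfolding ideal_on_def by blast
        show "Some ` B \<subseteq> I"
        proof
          fix z assume "z \<in> Some ` B"
          then obtain t where tB: "t \<in> B" "z = Some t" by blast
          obtain b1 b2 where b: "b1 \<in> B" "b2 \<in> B" "t = f (f b1 i') b2"
            using simple_B[OF ab sg cs, of i' t] i' tB unfolding B_def by blast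
          have "pfactor_op B f a (Some b1) (Some i') \<in> I" using Icl[of i "Some b1"] iI i' b by blast
          then have "Some (f b1 i') \<in> I" using opS b i' by simp
          then have "pfactor_op B f a (Some (f b1 i')) (Some b2) \<in> I" using Icl b by blast
          then show "z \<in> I" using opS Bcl b i' tB by simp
        qed
      qed
    qed
  qed
  have infl: "inflation_of A f B"
  proof -
    define P where "P x k \<longleftrightarrow> k \<in> B \<and> (\<forall>v\<in>A. f k v = f x v \<and> f v k = f v x)" for x k
    define phi where "phi x = (if x \<in> B then x else (SOME k. P x k))" for x
    have phiP: "P x (phi x)" if xA: "x \<in> A" for x
    proof (cases "x \<in> B")
      case True then show ?thesis unfolding phi_def P_def by simp
    next
      case False
      have "\<exists>k. P x k" using exists_k[OF ab sg cs xA] unfolding P_def B_def by blast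
      then show ?thesis unfolding phi_def using False someI_ex by metis
    qed
    have phiB: "phi b = b" if "b \<in> B" for b unfolding phi_def using that by simp
    define X where "X b = {x \<in> A. phi x = b}" for b
    show ?thesis unfolding inflation_of_def
    proof (intro conjI exI[of _ X])
      show "B \<subseteq> A" by (rule BA)
      show "semigroup_on B f" by (rule sgB)
      show "\<forall>b\<in>B. b \<in> X b \<and> X b \<subseteq> A" unfolding X_def using phiB BA by auto
      show "\<forall>x\<in>A. \<exists>!b. b \<in> B \<and> x \<in> X b"
      proof
        fix x assume xA: "x \<in> A"
        show "\<exists>!b. b \<in> B \<and> x \<in> X b"
        proof (rule ex1I[of _ "phi x"])
          show "phi x \<in> B \<and> x \<in> X (phi x)" using phiP[OF xA] xA unfolding P_def X_def by simp
          show "\<And>b. b \<in> B \<and> x \<in> X b \<Longrightarrow> b = phi x" unfolding X_def by simp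
        qed
      qed
      show "\<forall>a\<in>B. \<forall>b\<in>B. \<forall>x\<in>X a. \<forall>y\<in>X b. f x y = f a b"
      proof (intro ballI)
        fix a b x y assume "a \<in> B" "b \<in> B" "x \<in> X a" "y \<in> X b"
        then have x: "x \<in> A" "phi x = a" and y: "y \<in> A" "phi y = b" unfolding X_def by auto
        have px: "P x a" and py: "P y b" using phiP x y by auto
        have bA: "b \<in> A" using py BA unfolding P_def by blast
        have "f a b = f x b" using px bA unfolding P_def by blast
        also have "\<dots> = f x y" using py x(1) unfolding P_def by blast
        finally show "f x y = f a b" by simp
      qed
    qed
  qed
  show "\<exists>B. inflation_of A f B \<and> semisimple B f \<and> abelian_alg B f"
    using infl semi abB by blast
next
  assume "\<exists>B. inflation_of A f B \<and> semisimple B f \<and> abelian_alg B f"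
  then obtain B where "inflation_of A f B" "abelian_alg B f" by blast
  then show "abelian_alg A f" using infl_abel[OF assms(1)] by blast
qed

end
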